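(* Let $k\in\mathbb{Z}$. For all positive integers $x,n$, $$(-1)^{x-1}G_{n}^{(k)}(x)+G_{n}^{(k)}=2\sum_{m=1}^{n}\sum_{j=1}^{m}\sum_{i=0}^{x-1}(-1)^{i}i^{n-m}\binom{n}{m}\frac{S_{1}(m,j)}{j^{k-1}}.$$
   Context: Convention: $0^0=1$. For $k\in\mathbb{Z}$, $\mathrm{Ei}_k(x)=\sum_{n=1}^{\infty}\frac{x^n}{n^k(n-1)!}$. The poly-Genocchi polynomials $G_n^{(k)}(x)$ are defined by $\frac{2\,\mathrm{Ei}_k(\log(1+t))}{e^t+1}e^{xt}=\sum_{n=0}^{\infty}G_n^{(k)}(x)\frac{t^n}{n!}$, and $G_n^{(k)}=G_n^{(k)}(0)$. $S_1(n,m)$ are the signed Stirling numbers of the first kind: $\frac{(\log(1+t))^m}{m!}=\sum_{n=m}^{\infty}S_1(n,m)\frac{t^n}{n!}$. *)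

theory Defs
  imports Complex_Main "HOL-Computational_Algebra.Formal_Power_Series"
begin

definition poly_Ei_fps :: "int \<Rightarrow> real fps" where
  "poly_Ei_fps k = Abs_fps (\<lambda>n. if n = 0 then 0
       else 1 / ((real n powi k) * fact (n - 1)))"

(* generating function  2 Ei_k(log(1+t)) / (e^t + 1) * e^{x t};  fps_ln 1 = log(1+t) *)
definition poly_Genocchi_gf :: "int \<Rightarrow> real \<Rightarrow> real fps" where
  "poly_Genocchi_gf k x =
     fps_const 2 * (poly_Ei_fps k oo fps_ln 1) / (fps_exp 1 + 1) * fps_exp x"

definition poly_Genocchi :: "int \<Rightarrow> nat \<Rightarrow> real \<Rightarrow> real" where
  "poly_Genocchi k n x = fact n * fps_nth (poly_Genocchi_gf k x) n"

(* signed Stirling numbers of the first kind: (log(1+t))^m / m! = sum_n S1(n,m) t^n / n! *)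
definition S1 :: "nat \<Rightarrow> nat \<Rightarrow> real" where
  "S1 n m = fact n * fps_nth ((fps_ln 1) ^ m / fps_const (fact m)) n"

end

theory Submission
  imports Defs
begin

unbundle fps_syntax

lemma div_const_nth: "c \<noteq> 0 \<Longrightarrow> (f / fps_const (c::real)) $ n = f $ n / c"
  by (simp add: fps_divide_unit fps_const_inverse divide_inverse)

lemma S1_alt: "S1 m j = fact m * ((fps_ln (1::real)) ^ j) $ m / fact j"
  unfolding S1_def by (simp add: div_const_nth field_simps)

lemma coeffE: "(poly_Ei_fps k oo fps_ln 1) $ m
   = (\<Sum>j=1..m. S1 m j / (real j powi (k-1))) / fact m"
proof -
  have "(poly_Ei_fps k oo fps_ln 1) $ m = (\<Sum>j=0..m. poly_Ei_fps k $ j * ((fps_ln 1)^j $ m))"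
    by (rule fps_compose_nth)
  also have "\<dots> = (\<Sum>j=1..m. poly_Ei_fps k $ j * ((fps_ln 1)^j $ m))"
    by (rule sum.mono_neutral_right) (auto simp: poly_Ei_fps_def)
  also have "\<dots> = (\<Sum>j=1..m. S1 m j / (real j powi (k-1)) / fact m)"
  proof (rule sum.cong[OF refl])
    fix j assume j: "j \<in> {1..m}"
    then have j1: "j \<ge> 1" by auto
    have f: "(fact j :: real) = real j * fact (j - 1)"
      using j1 by (simp add: fact_reduce)
    have p: "real j powi (k - 1) = real j powi k / real j"
      using j1 by (simp add: power_int_diff)
    have q: "real j powi k \<noteq> 0" using j1 by simp
    show "poly_Ei_fps k $ j * (fps_ln 1 ^ j $ m) = S1 m j / (real j powi (k-1)) / fact m"
      using j1 q unfolding S1_alt p by (simp add: poly_Ei_fps_def f)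
  qed
  also have "\<dots> = (\<Sum>j=1..m. S1 m j / (real j powi (k-1))) / fact m"
    by (simp add: sum_divide_distrib)
  finally show ?thesis .
qed

lemma ring_aux: "e * X = Y \<Longrightarrow> 1 + C * X + (e + 1) * (- C * X) = 1 + (- C) * (Y::'a::comm_ring_1)"
  by (simp add: algebra_simps)

lemma Sid: "(fps_exp 1 + 1) * (\<Sum>i<x. fps_const ((-1)^i) * fps_exp (real i))
   = 1 + fps_const ((-1)^(x-1)) * fps_exp (real x)" if "x \<ge> 1"
  using that
proof (induction x rule: dec_induct)
  case base
  then show ?case by simp
next
  case (step x)
  have e: "fps_exp (1::real) * fps_exp (real x) = fps_exp (real (Suc x))"
    by (simp add: fps_exp_add_mult[symmetric] add.commute)
  have s: "(-1::real)^(Suc x - 1) = - ((-1)^(x-1))"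
    using step(1) by (cases x) auto
  have "(fps_exp 1 + 1) * (\<Sum>i<Suc x. fps_const ((-1)^i) * fps_exp (real i))
     = 1 + fps_const ((-1)^(x-1)) * fps_exp (real x)
       + (fps_exp 1 + 1) * (fps_const ((-1)^x) * fps_exp (real x))"
    using step(3) by (simp add: distrib_left)
  also have "fps_const ((-1::real)^x) = - fps_const ((-1)^(x-1))"
    using step(1) by (cases x) auto
  also have "1 + fps_const ((-1)^(x-1)) * fps_exp (real x)
       + (fps_exp 1 + 1) * (- fps_const ((-1)^(x-1)) * fps_exp (real x))
     = 1 + (- fps_const ((-1::real)^(x-1))) * fps_exp (real (Suc x))"
    by (rule ring_aux[OF e])
  also have "- fps_const ((-1::real)^(x-1)) = fps_const ((-1)^(Suc x - 1))"
    using s by simp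
  finally show ?case .
qed

lemma aux1: "c * (a * b) = f \<Longrightarrow> a \<noteq> 0 \<Longrightarrow> b \<noteq> 0 \<Longrightarrow>
   f * (t / a * (s / b)) = c * t * (s::real)"
  by (simp add: field_simps)

lemma aux2: "c * (s / p) * (u * r) = u * r * c * s / (p::real)"
  by (simp add: field_simps)

lemma gf_comb:
  fixes x :: nat and c :: real
  assumes "x \<ge> 1" and c: "c = (-1)^(x-1)"
  shows "fps_const c * poly_Genocchi_gf k (real x) + poly_Genocchi_gf k 0
    = fps_const 2 * (poly_Ei_fps k oo fps_ln 1) * (\<Sum>i<x. fps_const ((-1)^i) * fps_exp (real i))"
proof -
  define E where "E = poly_Ei_fps k oo fps_ln (1::real)"
  define D where "D = fps_exp (1::real) + 1"
  define S where "S = (\<Sum>i<x. fps_const ((-1::real)^i) * fps_exp (real i))"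
  have D0: "D $ 0 \<noteq> 0" by (simp add: D_def)
  have DI: "inverse D * D = 1" using D0 by (simp add: inverse_mult_eq_1)
  have g: "poly_Genocchi_gf k y = fps_const 2 * E * inverse D * fps_exp y" for y
    unfolding poly_Genocchi_gf_def E_def D_def[symmetric] using D0 by (simp add: fps_divide_unit)
  have "fps_const c * poly_Genocchi_gf k (real x) + poly_Genocchi_gf k 0
      = fps_const 2 * E * inverse D * (1 + fps_const c * fps_exp (real x))"
    unfolding g by (simp add: algebra_simps)
  also have "1 + fps_const c * fps_exp (real x) = D * S"
    using Sid[OF assms(1)] unfolding c D_def S_def by simp
  also have "fps_const 2 * E * inverse D * (D * S) = fps_const 2 * E * S * (inverse D * D)"
    by (simp add: algebra_simps)
  finally show ?thesis using DI by (simp add: E_def S_def)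
qed

theorem theorem4:
  fixes k :: int and x n :: nat
  assumes "x \<ge> 1" and "n \<ge> 1"
  shows "(-1) ^ (x - 1) * poly_Genocchi k n (real x) + poly_Genocchi k n 0 =
    2 * (\<Sum>m = 1..n. \<Sum>j = 1..m. \<Sum>i = 0..x - 1.
          (-1) ^ i * (real i) ^ (n - m) * real (n choose m) * S1 m j / (real j powi (k - 1)))"
proof -
  define E where "E = poly_Ei_fps k oo fps_ln (1::real)"
  define S where "S = (\<Sum>i<x. fps_const ((-1::real)^i) * fps_exp (real i))"
  define T where "T m = (\<Sum>j=1..m. S1 m j / (real j powi (k-1)))" for m
  have Sn: "S $ q = (\<Sum>i<x. (-1)^i * real i ^ q) / fact q" for q
    unfolding S_def by (simp add: fps_sum_nth sum_divide_distrib)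
  have "(-1) ^ (x - 1) * poly_Genocchi k n (real x) + poly_Genocchi k n 0
     = fact n * (fps_const ((-1) ^ (x - 1)) * poly_Genocchi_gf k (real x) + poly_Genocchi_gf k 0) $ n"
    unfolding poly_Genocchi_def by (simp add: algebra_simps)
  also have "\<dots> = fact n * (fps_const 2 * E * S) $ n"
    using gf_comb[OF assms(1) refl] by (simp add: E_def S_def)
  also have "\<dots> = 2 * (\<Sum>m=0..n. fact n * (E $ m * S $ (n - m)))"
    by (simp only: mult.assoc fps_mult_left_const_nth) (simp add: fps_mult_nth sum_distrib_left mult_ac)
  also have "\<dots> = 2 * (\<Sum>m=0..n. real (n choose m) * T m * (\<Sum>i<x. (-1)^i * real i ^ (n - m)))"
  proof -
    have "fact n * (E $ m * S $ (n - m)) = real (n choose m) * T m * (\<Sum>i<x. (-1)^i * real i ^ (n - m))"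
      if "m \<in> {0..n}" for m
    proof -
      have m: "m \<le> n" using that by simp
      have c: "real (n choose m) * (fact m * fact (n - m)) = fact n"
        using binomial_fact_lemma[OF m] by (metis mult.commute of_nat_fact of_nat_mult)
      show ?thesis unfolding E_def coeffE T_def[symmetric] Sn
        by (rule aux1[OF c]) simp_all
    qed
    then show ?thesis by simp
  qed
  also have "\<dots> = 2 * (\<Sum>m=1..n. real (n choose m) * T m * (\<Sum>i<x. (-1)^i * real i ^ (n - m)))"
    by (simp add: sum.atLeast_Suc_atMost T_def)
  also have "\<dots> = 2 * (\<Sum>m = 1..n. \<Sum>j = 1..m. \<Sum>i = 0..x - 1.
          (-1) ^ i * (real i) ^ (n - m) * real (n choose m) * S1 m j / (real j powi (k - 1)))"
  proof -
    have x: "{0..x-1} = {..<x}" using assms(1) by auto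
    have "real (n choose m) * T m * (\<Sum>i<x. (-1)^i * real i ^ (n - m))
       = (\<Sum>j = 1..m. \<Sum>i<x.
          (-1) ^ i * (real i) ^ (n - m) * real (n choose m) * S1 m j / (real j powi (k - 1)))" for m
    proof -
      have "real (n choose m) * T m * (\<Sum>i<x. (-1)^i * real i ^ (n - m))
         = (\<Sum>j = 1..m. (real (n choose m) * (S1 m j / (real j powi (k - 1)))) * (\<Sum>i<x. (-1)^i * real i ^ (n - m)))"
        unfolding T_def by (subst sum_distrib_left) (subst sum_distrib_right, rule refl)
      also have "\<dots> = (\<Sum>j = 1..m. \<Sum>i<x.
          (real (n choose m) * (S1 m j / (real j powi (k - 1)))) * ((-1)^i * real i ^ (n - m)))"
        by (simp only: sum_distrib_left)
      also have "\<dots> = (\<Sum>j = 1..m. \<Sum>i<x.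
          (-1) ^ i * (real i) ^ (n - m) * real (n choose m) * S1 m j / (real j powi (k - 1)))"
        by (intro sum.cong refl) (rule aux2)
      finally show ?thesis .
    qed
    then show ?thesis unfolding x by simp
  qed
  finally show ?thesis .
qed

end
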